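(* For all GP 2 programs (command sequences) $P$ and $Q$, $$P\ \mathtt{or}\ Q\ \equiv\ \mathtt{if}\ (\mathtt{remove!};\ \{\mathtt{create},\mathtt{null}\};\ \mathtt{zero})\ \mathtt{then}\ P\ \mathtt{else}\ Q,$$ where $\mathtt{remove}$ is a set of rule schemata that delete, respectively, an arbitrary non-loop edge, an arbitrary loop, and an arbitrary isolated node (labels given by list variables, with variants for every combination of marks, so that every edge, every loop and every isolated node of any host graph can be deleted by some schema in the set); $\mathtt{null}$ is the rule schema $\emptyset\Rightarrow\emptyset$; $\mathtt{create}$ is the rule schema $\emptyset\Rightarrow$ (a single unmarked node labelled $0$); and $\mathtt{zero}$ is the rule schema that matches a single unmarked node labelled $0$ and leaves it unchanged.
   Context: Host graphs are finite directed graphs (parallel edges and loops allowed) whose nodes and edges carry labels in $\mathcal{L}=(\mathbb{Z}\cup\mathrm{Char}^* )^*\times\{\mathrm{true},\mathrm{false}\}$ (a list of integers and strings together with a "mark" bit); graphs are considered up to isomorphism. A rule schema application $G\Rightarrow_r H$ consists of finding an injective match of the left graph of $r$ in $G$ (determining the values of the variables so that labels agree, and satisfying the rule's condition), deleting the images of the left-hand items not in the interface subject to the dangling condition (no deleted node may be incident to an undeleted edge), adding the right-hand items not in the interface, and relabelling interface nodes according to the right-hand side. For a set $R$ of rule schemata, $G\Rightarrow_R H$ means $G\Rightarrow_r H$ for some $r\in R$, and $G\not\Rightarrow_R$ means no such $H$ exists. Programs. Command sequences: ComSeq ::= Com {; Com}; Com ::= RuleSetCall | if ComSeq then ComSeq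 [else ComSeq] | try ComSeq then ComSeq [else ComSeq] | ComSeq ! | ComSeq or ComSeq | skip | fail; RuleSetCall ::= a rule schema name or a set $\{r_1,\dots,r_n\}$ ($n\ge 0$) of rule schemata. Operational semantics: a transition relation $\to$ from configurations $\langle P,G\rangle$ to configurations $\langle P',H\rangle$, graphs $H$, or fail, generated by the rules (with $R$ a rule set call, $C,P,P',Q$ command sequences, $G,H$ host graphs, $\to^+$ the transitive closure): [call1] $G\Rightarrow_R H$ implies $\langle R,G\rangle\to H$; [call2] $G\not\Rightarrow_R$ implies $\langle R,G\rangle\to\mathrm{fail}$; [seq1] $\langle P,G\rangle\to\langle P',H\rangle$ implies $\langle P;Q,G\rangle\to\langle P';Q,H\rangle$; [seq2] $\langle P,G\rangle\to H$ implies $\langle P;Q,G\rangle\to\langle Q,H\rangle$; [seq3] $\langle P,G\rangle\to\mathrm{fail}$ implies $\langle P;Q,G\rangle\to\mathrm{fail}$; [if1] $\langle C,G\rangle\to^+H$ implies $\langle \mathtt{if}\ C\ \mathtt{then}\ P\ \mathtt{else}\ Q,G\rangle\to\langle P,G\rangle$; [if2] $\langle C,G\rangle\to^+\mathrm{fail}$ implies $\langle \mathtt{if}\ C\ \mathtt{then}\ P\ \mathtt{else}\ Q,G\rangle\to\langle Q,G\rangle$; [try1] $\langle C,G\rangle\to^+H$ implies $\langle \mathtt{try}\ C\ \mathtt{then}\ P\ \mathtt{else}\ Q,G\rangle\to\langle P,H\rangle$; [try2] $\langle C,G\rangle\to^+\mathrm{fail}$ implies $\langle \mathtt{try}\ C\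 \mathtt{then}\ P\ \mathtt{else}\ Q,G\rangle\to\langle Q,G\rangle$; [alap1] $\langle P,G\rangle\to^+H$ implies $\langle P!,G\rangle\to\langle P!,H\rangle$; [alap2] $\langle P,G\rangle\to^+\mathrm{fail}$ implies $\langle P!,G\rangle\to G$; [or1] $\langle P\ \mathtt{or}\ Q,G\rangle\to\langle P,G\rangle$; [or2] $\langle P\ \mathtt{or}\ Q,G\rangle\to\langle Q,G\rangle$; [skip] $\langle\mathtt{skip},G\rangle\to G$; [fail] $\langle\mathtt{fail},G\rangle\to\mathrm{fail}$; [if3] $\langle C,G\rangle\to^+H$ implies $\langle\mathtt{if}\ C\ \mathtt{then}\ P,G\rangle\to\langle P,G\rangle$; [if4] $\langle C,G\rangle\to^+\mathrm{fail}$ implies $\langle\mathtt{if}\ C\ \mathtt{then}\ P,G\rangle\to G$; [try3] $\langle C,G\rangle\to^+H$ implies $\langle\mathtt{try}\ C\ \mathtt{then}\ P,G\rangle\to\langle P,H\rangle$; [try4] $\langle C,G\rangle\to^+\mathrm{fail}$ implies $\langle\mathtt{try}\ C\ \mathtt{then}\ P,G\rangle\to G$. A configuration is terminal if it has no successor. $P$ can diverge from $G$ if there is an infinite sequence $\langle P,G\rangle\to\langle P_1,G_1\rangle\to\langle P_2,G_2\rangle\to\cdots$; $P$ can get stuck from $G$ if $\langle P,G\rangle\to^*\langle Q,H\rangle$ for some terminal configuration $\langle Q,H\rangle$. Semantic function: $[\![P]\!]G=\{X\in\mathcal{G}(\mathcal{L})\cup\{\mathrm{fail}\}\mid \langle P,G\rangle\to^+X\}\cup\{\bot\mid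 P\text{ can diverge or get stuck from }G\}$. Programs are semantically equivalent, $P\equiv Q$, if $[\![P]\!]=[\![Q]\!]$. *)

theory Defs
  imports Main
begin

datatype atom = AInt int | AStr string

text \<open>Labels: a list of integers and strings together with a mark bit.\<close>
type_synonym label = "atom list \<times> bool"

record hgraph =
  V  :: "nat set"
  E  :: "nat set"
  src :: "nat \<Rightarrow> nat"
  tgt :: "nat \<Rightarrow> nat"
  nlab :: "nat \<Rightarrow> label"
  elab :: "nat \<Rightarrow> label"

definition wf_graph :: "hgraph \<Rightarrow> bool" where
  "wf_graph G \<longleftrightarrow> finite (V G) \<and> finite (E G) \<and>
     (\<forall>e\<in>E G. src G e \<in> V G \<and> tgt G e \<in> V G)"

definition graph_iso :: "hgraph \<Rightarrow> hgraph \<Rightarrow> bool" where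
  "graph_iso G H \<longleftrightarrow> (\<exists>fv fe. bij_betw fv (V G) (V H) \<and> bij_betw fe (E G) (E H) \<and>
     (\<forall>e\<in>E G. src H (fe e) = fv (src G e) \<and> tgt H (fe e) = fv (tgt G e)
               \<and> elab H (fe e) = elab G e) \<and>
     (\<forall>v\<in>V G. nlab H (fv v) = nlab G v))"

text \<open>Built-in rule schemata of the theorem, plus arbitrary user rule schemata
  (names of type 'r) whose application relation is given by a parameter.\<close>
datatype 'r rule = RmEdge | RmLoop | RmNode | Create | Null | Zero | User 'r

definition zero_label :: label where "zero_label = ([AInt 0], False)"

fun app_rule :: "('r \<Rightarrow> hgraph \<Rightarrow> hgraph \<Rightarrow> bool) \<Rightarrow> 'r rule \<Rightarrow> hgraph \<Rightarrow> hgraph \<Rightarrow> bool" where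
  "app_rule U RmEdge G H \<longleftrightarrow> (\<exists>e\<in>E G. src G e \<noteq> tgt G e \<and> H = G\<lparr>E := E G - {e}\<rparr>)"
| "app_rule U RmLoop G H \<longleftrightarrow> (\<exists>e\<in>E G. src G e = tgt G e \<and> H = G\<lparr>E := E G - {e}\<rparr>)"
| "app_rule U RmNode G H \<longleftrightarrow> (\<exists>v\<in>V G. (\<forall>e\<in>E G. src G e \<noteq> v \<and> tgt G e \<noteq> v)
                                   \<and> H = G\<lparr>V := V G - {v}\<rparr>)"
| "app_rule U Create G H \<longleftrightarrow> (\<exists>n. n \<notin> V G \<and>
        H = G\<lparr>V := insert n (V G), nlab := (nlab G)(n := zero_label)\<rparr>)"
| "app_rule U Null G H \<longleftrightarrow> H = G"
| "app_rule U Zero G H \<longleftrightarrow> H = G \<and> (\<exists>v\<in>V G. nlab G v = zero_label)"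
| "app_rule U (User r) G H \<longleftrightarrow> U r G H"

definition app_set :: "('r \<Rightarrow> hgraph \<Rightarrow> hgraph \<Rightarrow> bool) \<Rightarrow> 'r rule list \<Rightarrow> hgraph \<Rightarrow> hgraph \<Rightarrow> bool" where
  "app_set U R G H \<longleftrightarrow> (\<exists>r\<in>set R. app_rule U r G H)"

datatype 'r com =
    Call "'r rule list"
  | Seq "'r com" "'r com"
  | If "'r com" "'r com" "'r com"
  | IfT "'r com" "'r com"
  | Try "'r com" "'r com" "'r com"
  | TryT "'r com" "'r com"
  | Alap "'r com"
  | Or "'r com" "'r com"
  | Skip
  | Fail

type_synonym 'r conf = "'r com \<times> hgraph"

datatype 'r tgt = Cfg "'r com" hgraph | Gr hgraph | Fl

inductive step :: "('r \<Rightarrow> hgraph \<Rightarrow> hgraph \<Rightarrow> bool) \<Rightarrow> 'r conf \<Rightarrow> 'r tgt \<Rightarrow> bool"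
  and steps :: "('r \<Rightarrow> hgraph \<Rightarrow> hgraph \<Rightarrow> bool) \<Rightarrow> 'r conf \<Rightarrow> 'r tgt \<Rightarrow> bool"
  for U where
  call1: "app_set U R G H \<Longrightarrow> step U (Call R, G) (Gr H)"
| call2: "\<not> (\<exists>H. app_set U R G H) \<Longrightarrow> step U (Call R, G) Fl"
| seq1: "step U (P, G) (Cfg P' H) \<Longrightarrow> step U (Seq P Q, G) (Cfg (Seq P' Q) H)"
| seq2: "step U (P, G) (Gr H) \<Longrightarrow> step U (Seq P Q, G) (Cfg Q H)"
| seq3: "step U (P, G) Fl \<Longrightarrow> step U (Seq P Q, G) Fl"
| if1: "steps U (C, G) (Gr H) \<Longrightarrow> step U (If C P Q, G) (Cfg P G)"
| if2: "steps U (C, G) Fl \<Longrightarrow> step U (If C P Q, G) (Cfg Q G)"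
| try1: "steps U (C, G) (Gr H) \<Longrightarrow> step U (Try C P Q, G) (Cfg P H)"
| try2: "steps U (C, G) Fl \<Longrightarrow> step U (Try C P Q, G) (Cfg Q G)"
| alap1: "steps U (P, G) (Gr H) \<Longrightarrow> step U (Alap P, G) (Cfg (Alap P) H)"
| alap2: "steps U (P, G) Fl \<Longrightarrow> step U (Alap P, G) (Gr G)"
| or1: "step U (Or P Q, G) (Cfg P G)"
| or2: "step U (Or P Q, G) (Cfg Q G)"
| skip: "step U (Skip, G) (Gr G)"
| fail: "step U (Fail, G) Fl"
| if3: "steps U (C, G) (Gr H) \<Longrightarrow> step U (IfT C P, G) (Cfg P G)"
| if4: "steps U (C, G) Fl \<Longrightarrow> step U (IfT C P, G) (Gr G)"
| try3: "steps U (C, G) (Gr H) \<Longrightarrow> step U (TryT C P, G) (Cfg P H)"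
| try4: "steps U (C, G) Fl \<Longrightarrow> step U (TryT C P, G) (Gr G)"
| steps_one: "step U c x \<Longrightarrow> steps U c x"
| steps_more: "step U c (Cfg P' H) \<Longrightarrow> steps U (P', H) x \<Longrightarrow> steps U c x"

definition cstep :: "('r \<Rightarrow> hgraph \<Rightarrow> hgraph \<Rightarrow> bool) \<Rightarrow> 'r conf \<Rightarrow> 'r conf \<Rightarrow> bool" where
  "cstep U c c' \<longleftrightarrow> step U c (Cfg (fst c') (snd c'))"

definition can_diverge :: "('r \<Rightarrow> hgraph \<Rightarrow> hgraph \<Rightarrow> bool) \<Rightarrow> 'r com \<Rightarrow> hgraph \<Rightarrow> bool" where
  "can_diverge U P G \<longleftrightarrow> (\<exists>f :: nat \<Rightarrow> 'r conf. f 0 = (P, G) \<and> (\<forall>i. cstep U (f i) (f (Suc i))))"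

definition terminal :: "('r \<Rightarrow> hgraph \<Rightarrow> hgraph \<Rightarrow> bool) \<Rightarrow> 'r conf \<Rightarrow> bool" where
  "terminal U c \<longleftrightarrow> \<not> (\<exists>x. step U c x)"

definition can_get_stuck :: "('r \<Rightarrow> hgraph \<Rightarrow> hgraph \<Rightarrow> bool) \<Rightarrow> 'r com \<Rightarrow> hgraph \<Rightarrow> bool" where
  "can_get_stuck U P G \<longleftrightarrow> (\<exists>c. (cstep U)\<^sup>*\<^sup>* (P, G) c \<and> terminal U c)"

datatype result = Res hgraph | RFail | Bot

definition sem :: "('r \<Rightarrow> hgraph \<Rightarrow> hgraph \<Rightarrow> bool) \<Rightarrow> 'r com \<Rightarrow> hgraph \<Rightarrow> result set" where
  "sem U P G = {Res H | H. steps U (P, G) (Gr H)} \<union> (if steps U (P, G) Fl then {RFail} else {})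
     \<union> (if can_diverge U P G \<or> can_get_stuck U P G then {Bot} else {})"

text \<open>Results compared up to graph isomorphism (host graphs are considered up to isomorphism).\<close>
fun res_eq :: "result \<Rightarrow> result \<Rightarrow> bool" where
  "res_eq (Res G) (Res H) = graph_iso G H"
| "res_eq RFail RFail = True"
| "res_eq Bot Bot = True"
| "res_eq _ _ = False"

definition res_sets_eq :: "result set \<Rightarrow> result set \<Rightarrow> bool" where
  "res_sets_eq A B \<longleftrightarrow> (\<forall>x\<in>A. \<exists>y\<in>B. res_eq x y) \<and> (\<forall>y\<in>B. \<exists>x\<in>A. res_eq x y)"

definition sem_equiv :: "('r \<Rightarrow> hgraph \<Rightarrow> hgraph \<Rightarrow> bool) \<Rightarrow> 'r com \<Rightarrow> 'r com \<Rightarrow> bool" where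
  "sem_equiv U P Q \<longleftrightarrow> (\<forall>G. wf_graph G \<longrightarrow> res_sets_eq (sem U P G) (sem U Q G))"

text \<open>The set remove (all mark variants merged per shape) and the condition program.\<close>
definition remove :: "'r rule list" where "remove = [RmEdge, RmLoop, RmNode]"

end

theory Submission
  imports Defs
begin

lemma steps_trans:
  "steps U c y \<Longrightarrow> (\<And>P H. y = Cfg P H \<Longrightarrow> steps U (P, H) x \<Longrightarrow> steps U c x)"
proof (induction rule: step_steps.inducts(2)[where ?P1.0="\<lambda>c x. True"])
  case (steps_one c y)
  then show ?case using step_steps.steps_more by blast
next
  case (steps_more c P' H y)
  then show ?case using step_steps.steps_more by blast
qed auto

lemma steps_seq:
  "steps U c y \<Longrightarrow> (\<And>A G H. c = (A, G) \<Longrightarrow> y = Gr H \<Longrightarrow> steps U (Seq A B, G) (Cfg B H))"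
proof (induction rule: step_steps.inducts(2)[where ?P1.0="\<lambda>c x. True"])
  case (steps_one c y)
  then show ?case using step_steps.seq2 step_steps.steps_one by blast
next
  case (steps_more c P' H y)
  from steps_more.prems obtain A G0 H0 where "c = (A, G0)" "y = Gr H0" by simp
  then show ?case using steps_more step_steps.seq1 step_steps.steps_more by (metis surj_pair)
qed auto

lemma alap_remove:
  "wf_graph G \<Longrightarrow> \<exists>H. steps U (Alap (Call remove), G) (Gr H) \<and> V H = {} \<and> E H = {}"
proof (induction "card (V G) + card (E G)" arbitrary: G rule: less_induct)
  case less
  show ?case
  proof (cases "E G = {}")
    case False
    then obtain e where e: "e \<in> E G" by blast
    define H' where "H' = G\<lparr>E := E G - {e}\<rparr>"
    have app: "app_set U remove G H'"
      unfolding app_set_def remove_def H'_def using e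
      by (cases "src G e = tgt G e") auto
    have wf: "wf_graph H'" using less.prems unfolding wf_graph_def H'_def by auto
    have "card (E H') < card (E G)" using e less.prems unfolding H'_def wf_graph_def
      using card_gt_0_iff[of "E G"] by auto
    moreover have "V H' = V G" by (simp add: H'_def)
    ultimately obtain H where H: "steps U (Alap (Call remove), H') (Gr H) \<and> V H = {} \<and> E H = {}"
      using less.hyps[OF _ wf] by fastforce
    have "step U (Alap (Call remove), G) (Cfg (Alap (Call remove)) H')"
      using app by (intro step_steps.alap1 step_steps.steps_one step_steps.call1)
    then show ?thesis using H step_steps.steps_more by blast
  next
    case Ee: True
    show ?thesis
    proof (cases "V G = {}")
      case False
      then obtain v where v: "v \<in> V G" by blast
      define H' where "H' = G\<lparr>V := V G - {v}\<rparr>"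
      have app: "app_set U remove G H'"
        unfolding app_set_def remove_def H'_def using v Ee by auto
      have wf: "wf_graph H'" using less.prems Ee unfolding wf_graph_def H'_def by auto
      have "card (V H') < card (V G)" using v less.prems unfolding H'_def wf_graph_def
        using card_gt_0_iff[of "V G"] by auto
      moreover have "E H' = E G" by (simp add: H'_def)
      ultimately obtain H where H: "steps U (Alap (Call remove), H') (Gr H) \<and> V H = {} \<and> E H = {}"
        using less.hyps[OF _ wf] by fastforce
      have "step U (Alap (Call remove), G) (Cfg (Alap (Call remove)) H')"
        using app by (intro step_steps.alap1 step_steps.steps_one step_steps.call1)
      then show ?thesis using H step_steps.steps_more by blast
    next
      case True
      have "\<not> (\<exists>H. app_set U remove G H)"
        unfolding app_set_def remove_def using True Ee by auto
      then have "step U (Alap (Call remove), G) (Gr G)"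
        by (intro step_steps.alap2 step_steps.steps_one step_steps.call2)
      then show ?thesis using True Ee step_steps.steps_one by blast
    qed
  qed
qed

abbreviation cond where
  "cond \<equiv> Seq (Alap (Call remove)) (Seq (Call [Create, Null]) (Call [Zero]))"

lemma cond_both:
  assumes "wf_graph G"
  shows "\<exists>H. steps U (cond, G) (Gr H)" and "steps U (cond, G) Fl"
proof -
  obtain H0 where H0: "steps U (Alap (Call remove), G) (Gr H0)" "V H0 = {}" "E H0 = {}"
    using alap_remove[OF assms] by blast
  have s1: "steps U (cond, G) (Cfg (Seq (Call [Create, Null]) (Call [Zero])) H0)"
    using steps_seq[OF H0(1)] by blast
  define H1 where "H1 = H0\<lparr>V := insert 0 (V H0), nlab := (nlab H0)(0 := zero_label)\<rparr>"
  have a1: "app_set U [Create, Null] H0 H1" unfolding app_set_def H1_def using H0 by auto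
  have a2: "app_set U [Zero] H1 H1" unfolding app_set_def H1_def by auto
  have "step U (Seq (Call [Create, Null]) (Call [Zero]), H0) (Cfg (Call [Zero]) H1)"
    using a1 by (intro step_steps.seq2 step_steps.call1)
  moreover have "step U (Call [Zero], H1) (Gr H1)" using a2 by (rule step_steps.call1)
  ultimately have "steps U (Seq (Call [Create, Null]) (Call [Zero]), H0) (Gr H1)"
    using step_steps.steps_more step_steps.steps_one by blast
  then show "\<exists>H. steps U (cond, G) (Gr H)" using steps_trans[OF s1] by blast
  have b1: "app_set U [Create, Null] H0 H0" unfolding app_set_def by auto
  have b2: "\<not> (\<exists>H. app_set U [Zero] H0 H)" unfolding app_set_def using H0 by auto
  have "step U (Seq (Call [Create, Null]) (Call [Zero]), H0) (Cfg (Call [Zero]) H0)"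
    using b1 by (intro step_steps.seq2 step_steps.call1)
  moreover have "step U (Call [Zero], H0) Fl" using b2 by (rule step_steps.call2)
  ultimately have "steps U (Seq (Call [Create, Null]) (Call [Zero]), H0) Fl"
    using step_steps.steps_more step_steps.steps_one by blast
  then show "steps U (cond, G) Fl" using steps_trans[OF s1] by blast
qed

lemma same_succ_steps:
  assumes "\<And>y. step U c1 y \<longleftrightarrow> step U c2 y"
  shows "steps U c1 x \<longleftrightarrow> steps U c2 x"
proof
  assume "steps U c1 x"
  then show "steps U c2 x"
    by (cases rule: steps.cases) (auto simp: assms intro: step_steps.steps_one step_steps.steps_more)
next
  assume "steps U c2 x"
  then show "steps U c1 x"
    by (cases rule: steps.cases) (auto simp: assms intro: step_steps.steps_one step_steps.steps_more)
qed

lemma same_succ_div: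
  assumes "\<And>y. step U (P1, G) y \<longleftrightarrow> step U (P2, G) y"
  shows "can_diverge U P1 G \<longleftrightarrow> can_diverge U P2 G"
proof -
  have *: "can_diverge U A G \<Longrightarrow> can_diverge U B G"
    if h: "\<And>y. step U (A, G) y \<longleftrightarrow> step U (B, G) y" for A B
  proof -
    assume "can_diverge U A G"
    then obtain f where f: "f 0 = (A, G)" "\<forall>i. cstep U (f i) (f (Suc i))"
      unfolding can_diverge_def by blast
    define g where "g = f(0 := (B, G))"
    have "\<forall>i. cstep U (g i) (g (Suc i))"
    proof
      fix i show "cstep U (g i) (g (Suc i))"
      proof (cases i)
        case 0 then show ?thesis using f(1) f(2)[rule_format, of 0] h unfolding g_def cstep_def by auto
      next
        case (Suc n) then show ?thesis using f unfolding g_def by auto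
      qed
    qed
    then show ?thesis unfolding can_diverge_def by (intro exI[of _ g]) (simp add: g_def)
  qed
  show ?thesis using *[of P1 P2] *[of P2 P1] assms by blast
qed

lemma same_succ_stuck:
  assumes "\<And>y. step U (P1, G) y \<longleftrightarrow> step U (P2, G) y"
  shows "can_get_stuck U P1 G \<longleftrightarrow> can_get_stuck U P2 G"
proof -
  have *: "can_get_stuck U A G \<Longrightarrow> can_get_stuck U B G"
    if h: "\<And>y. step U (A, G) y \<longleftrightarrow> step U (B, G) y" for A B
  proof -
    assume "can_get_stuck U A G"
    then obtain c where c: "(cstep U)\<^sup>*\<^sup>* (A, G) c" "terminal U c"
      unfolding can_get_stuck_def by blast
    from c(1) show ?thesis
    proof (cases rule: converse_rtranclpE)
      case base
      then have "terminal U (B, G)" using c(2) h unfolding terminal_def by auto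
      then show ?thesis unfolding can_get_stuck_def by blast
    next
      case (step c')
      then have "cstep U (B, G) c'" using h unfolding cstep_def by auto
      then have "(cstep U)\<^sup>*\<^sup>* (B, G) c" using step(2) by (rule converse_rtranclp_into_rtranclp)
      then show ?thesis using c(2) unfolding can_get_stuck_def by blast
    qed
  qed
  show ?thesis using *[of P1 P2] *[of P2 P1] assms by blast
qed

lemma same_succ_sem:
  assumes "\<And>y. step U (P1, G) y \<longleftrightarrow> step U (P2, G) y"
  shows "sem U P1 G = sem U P2 G"
  unfolding sem_def using same_succ_steps[of U "(P1,G)" "(P2,G)", OF assms]
    same_succ_div[OF assms] same_succ_stuck[OF assms] by simp

lemma res_eq_refl: "res_eq x x"
proof (cases x)
  case (Res G)
  have "graph_iso G G" unfolding graph_iso_def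
    by (rule exI[of _ id], rule exI[of _ id]) auto
  then show ?thesis using Res by simp
qed auto

theorem mainTheorem2:
  fixes U :: "'r \<Rightarrow> hgraph \<Rightarrow> hgraph \<Rightarrow> bool" and P Q :: "'r com"
  shows "sem_equiv U (Or P Q)
           (If (Seq (Alap (Call remove)) (Seq (Call [Create, Null]) (Call [Zero]))) P Q)"
  unfolding sem_equiv_def
proof (intro allI impI)
  fix G assume wf: "wf_graph G"
  obtain H where H: "steps U (cond, G) (Gr H)" using cond_both(1)[OF wf] by blast
  have F: "steps U (cond, G) Fl" using cond_both(2)[OF wf] .
  have "step U (Or P Q, G) y \<longleftrightarrow> step U (If cond P Q, G) y" for y
  proof
    assume "step U (Or P Q, G) y"
    then have "y = Cfg P G \<or> y = Cfg Q G" by (cases rule: step.cases) auto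
    then show "step U (If cond P Q, G) y"
      using step_steps.if1[OF H] step_steps.if2[OF F] by blast
  next
    assume "step U (If cond P Q, G) y"
    then have "y = Cfg P G \<or> y = Cfg Q G" by (cases rule: step.cases) auto
    then show "step U (Or P Q, G) y" using step_steps.or1 step_steps.or2 by blast
  qed
  then have "sem U (Or P Q) G = sem U (If cond P Q) G" by (rule same_succ_sem)
  then show "res_sets_eq (sem U (Or P Q) G) (sem U (If cond P Q) G)"
    unfolding res_sets_eq_def using res_eq_refl by metis
qed

end
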